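(* Let $f : \widehat{\mathbb{Z}} \to \widehat{\mathbb{Z}}$ be a continuous map, $P$ a period map of $f$, and let $k, m, n \in \mathbb{N}$ satisfy $m = P^k(n) = P^{k+1}(n)$. Let $K$ be the preperiod length and $L$ the period of the reduction $f_m : \mathbb{Z}/m\mathbb{Z} \to \mathbb{Z}/m\mathbb{Z}$. Then for all $s, t \in \widehat{\mathbb{Z}}$ and $u, v \in \mathbb{N}$, if $s \equiv_m t$, $u, v \ge k + K$ and $u \equiv_L v$, then $f^u(s) \equiv_n f^v(t)$.
   Context: $\mathbb{N} = \{1,2,\dots\}$, $\widehat{\mathbb{Z}} = \varprojlim_n \mathbb{Z}/n\mathbb{Z}$; for $s,t \in \widehat{\mathbb{Z}}$, $s \equiv_n t$ means $s - t \in n\widehat{\mathbb{Z}}$; $f^u$ and $P^k$ denote iterates. A map $P:\mathbb{N} \to \mathbb{N}$ is a period map of $f$ if $s \equiv_{P(n)} t$ implies $f(s) \equiv_n f(t)$ for all $s,t,n$; then $f$ induces reductions $f_n : \mathbb{Z}/P(n)\mathbb{Z} \to \mathbb{Z}/n\mathbb{Z}$, and since $P(m) = m$, $f_m$ is a self-map of $\mathbb{Z}/m\mathbb{Z}$. For a self-map $\sigma$ of a finite set $F$ and $y \in F$, the tail length $k_y$ and cycle length $l_y$ are the unique integers $k_y \ge 0$, $l_y \ge 1$ such that for $k' \ge 0, l' \ge 1$: $\sigma^{k'}(y) = \sigma^{k'+l'}(y)$ iff $k_y \le k'$ and $l_y \mid l'$. The preperiod length of $\sigma$ is $\max_y k_y$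 and the period of $\sigma$ is $\operatorname{lcm}_y l_y$. *)

theory Defs
  imports Complex_Main
begin

text \<open>The profinite integers as the inverse limit of the rings Z/nZ (n >= 1):
  compatible families (x_n), x_n in {0..<n} representing a residue mod n.
  The value at index 0 is normalised to 0 and is irrelevant.\<close>

typedef zhat = "{x :: nat \<Rightarrow> int. x 0 = 0 \<and> (\<forall>n>0. 0 \<le> x n \<and> x n < int n) \<and>
   (\<forall>m n. 0 < m \<and> 0 < n \<and> n dvd m \<longrightarrow> x m mod int n = x n)}"
  by (rule exI[of _ "\<lambda>_. 0"]) auto

definition zcong :: "nat \<Rightarrow> zhat \<Rightarrow> zhat \<Rightarrow> bool" where
  "zcong n s t \<longleftrightarrow> Rep_zhat s n = Rep_zhat t n"

lemma zcong_mult_left: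
  assumes "0 < a" "0 < b" "zcong (a * b) s t" shows "zcong a s t"
proof -
  have "\<And>x. Rep_zhat x (a*b) mod int a = Rep_zhat x a"
    using Rep_zhat assms(1,2) by auto
  then show ?thesis using assms(3) unfolding zcong_def by metis
qed

lemma zcong_mult_right:
  assumes "0 < a" "0 < b" "zcong (a * b) s t" shows "zcong b s t"
  using zcong_mult_left[of b a s t] assms by (simp add: mult.commute)

text \<open>Profinite topology: basic opens are residue classes s + n Zhat.\<close>
instantiation zhat :: topological_space
begin
definition open_zhat :: "zhat set \<Rightarrow> bool" where
  "open_zhat U \<longleftrightarrow> (\<forall>x\<in>U. \<exists>n>0. {y. zcong n y x} \<subseteq> U)"
instance
proof
  show "open (UNIV :: zhat set)" unfolding open_zhat_def by auto
next
  fix S T :: "zhat set" assume S: "open S" and T: "open T"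
  show "open (S \<inter> T)" unfolding open_zhat_def
  proof
    fix x assume "x \<in> S \<inter> T"
    then obtain a b where a: "a > 0" "{y. zcong a y x} \<subseteq> S"
      and b: "b > 0" "{y. zcong b y x} \<subseteq> T"
      using S T unfolding open_zhat_def by blast
    have H: "{y. zcong (a*b) y x} \<subseteq> S \<inter> T"
      using a b zcong_mult_left[OF a(1) b(1)] zcong_mult_right[OF a(1) b(1)] by blast
    have "0 < a * b" using a(1) b(1) by (rule mult_pos_pos)
    with H show "\<exists>n>0. {y. zcong n y x} \<subseteq> S \<inter> T" by blast
  qed
next
  fix K :: "zhat set set" assume K: "\<forall>S\<in>K. open S"
  show "open (\<Union>K)" unfolding open_zhat_def
  proof
    fix x assume "x \<in> \<Union>K"
    then obtain S where S: "S \<in> K" "x \<in> S" by (rule UnionE)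
    then have "open S" using K by simp
    then obtain n where "n > 0" "{y. zcong n y x} \<subseteq> S"
      using S(2) unfolding open_zhat_def by auto
    then show "\<exists>n>0. {y. zcong n y x} \<subseteq> \<Union>K" using S(1) by auto
  qed
qed
end

definition period_map :: "(zhat \<Rightarrow> zhat) \<Rightarrow> (nat \<Rightarrow> nat) \<Rightarrow> bool" where
  "period_map f P \<longleftrightarrow> (\<forall>n>0. P n > 0) \<and>
     (\<forall>s t n. n > 0 \<longrightarrow> zcong (P n) s t \<longrightarrow> zcong n (f s) (f t))"

definition zhat_of_int :: "int \<Rightarrow> zhat" where
  "zhat_of_int a = Abs_zhat (\<lambda>n. if n = 0 then 0 else a mod int n)"

text \<open>Reduction f_m : Z/mZ \<rightarrow> Z/mZ (when P m = m), with Z/mZ represented by {0..<m}.\<close>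
definition reduction :: "(zhat \<Rightarrow> zhat) \<Rightarrow> nat \<Rightarrow> int \<Rightarrow> int" where
  "reduction f m a = Rep_zhat (f (zhat_of_int a)) m"

definition tail_cycle :: "('a \<Rightarrow> 'a) \<Rightarrow> 'a \<Rightarrow> nat \<times> nat" where
  "tail_cycle \<sigma> y = (THE (k, l). l \<ge> 1 \<and>
     (\<forall>k' l'. l' \<ge> 1 \<longrightarrow> ((\<sigma> ^^ k') y = (\<sigma> ^^ (k' + l')) y \<longleftrightarrow> k \<le> k' \<and> l dvd l')))"

definition preperiod_length :: "('a \<Rightarrow> 'a) \<Rightarrow> 'a set \<Rightarrow> nat" where
  "preperiod_length \<sigma> F = Max ((\<lambda>y. fst (tail_cycle \<sigma> y)) ` F)"

definition period_of :: "('a \<Rightarrow> 'a) \<Rightarrow> 'a set \<Rightarrow> nat" where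
  "period_of \<sigma> F = Lcm ((\<lambda>y. snd (tail_cycle \<sigma> y)) ` F)"

end

theory Submission
  imports Defs
begin

lemma orb_shift:
  fixes \<sigma> :: "'a \<Rightarrow> 'a"
  assumes "(\<sigma>^^a) y = (\<sigma>^^c) y" shows "(\<sigma>^^(a+d)) y = (\<sigma>^^(c+d)) y"
proof -
  have "(\<sigma>^^(a+d)) y = (\<sigma>^^(d+a)) y" by (metis add.commute)
  also have "\<dots> = (\<sigma>^^d) ((\<sigma>^^a) y)" by (simp only: funpow_add comp_apply)
  also have "\<dots> = (\<sigma>^^d) ((\<sigma>^^c) y)" using assms by simp
  also have "\<dots> = (\<sigma>^^(d+c)) y" by (simp only: funpow_add comp_apply)
  also have "\<dots> = (\<sigma>^^(c+d)) y" by (metis add.commute)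
  finally show ?thesis .
qed

lemma orb_per1:
  fixes \<sigma> :: "'a \<Rightarrow> 'a"
  assumes "(\<sigma>^^a) y = (\<sigma>^^(a+l)) y" "a \<le> b"
  shows "(\<sigma>^^(b+l)) y = (\<sigma>^^b) y"
proof -
  have "(\<sigma>^^(a+(b-a))) y = (\<sigma>^^(a+l+(b-a))) y"
    using orb_shift[OF assms(1)] by blast
  moreover have "a+(b-a) = b" "a+l+(b-a) = b+l" using assms(2) by auto
  ultimately show ?thesis by simp
qed

lemma orb_perq:
  fixes \<sigma> :: "'a \<Rightarrow> 'a"
  assumes "(\<sigma>^^a) y = (\<sigma>^^(a+l)) y" "a \<le> b"
  shows "(\<sigma>^^(b+q*l)) y = (\<sigma>^^b) y"
proof (induction q)
  case 0 then show ?case by simp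
next
  case (Suc q)
  have "(\<sigma>^^(b+q*l+l)) y = (\<sigma>^^(b+q*l)) y"
    using orb_per1[OF assms(1), of "b+q*l"] assms(2) by simp
  moreover have eq: "b + Suc q * l = b+q*l+l" by simp
  ultimately show ?case using Suc by metis
qed

lemma tail_cycle_spec:
  fixes \<sigma> :: "'a \<Rightarrow> 'a" and F :: "'a set" and y :: 'a
  assumes fin: "finite F" and inv: "\<forall>x\<in>F. \<sigma> x \<in> F" and y: "y \<in> F"
  shows "snd (tail_cycle \<sigma> y) \<ge> 1 \<and> (\<forall>k' l'. l' \<ge> 1 \<longrightarrow>
     ((\<sigma>^^k') y = (\<sigma>^^(k'+l')) y \<longleftrightarrow> fst (tail_cycle \<sigma> y) \<le> k' \<and> snd (tail_cycle \<sigma> y) dvd l'))"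
proof -
  define Q where "Q = (\<lambda>(k::nat, l::nat). l \<ge> 1 \<and>
     (\<forall>k' l'. l' \<ge> 1 \<longrightarrow> ((\<sigma> ^^ k') y = (\<sigma> ^^ (k' + l')) y \<longleftrightarrow> k \<le> k' \<and> l dvd l')))"
  have orbF: "(\<sigma>^^i) y \<in> F" for i by (induction i) (use y inv in auto)
  have "\<not> inj_on (\<lambda>i. (\<sigma>^^i) y) (UNIV::nat set)"
  proof
    assume "inj_on (\<lambda>i. (\<sigma>^^i) y) (UNIV::nat set)"
    moreover have "finite ((\<lambda>i. (\<sigma>^^i) y) ` UNIV)"
      using orbF by (intro finite_subset[OF _ fin]) auto
    ultimately have "finite (UNIV::nat set)" using finite_imageD by blast
    then show False by simp
  qed
  then obtain i j where ij: "i \<noteq> j" "(\<sigma>^^i) y = (\<sigma>^^j) y" unfolding inj_on_def by blast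
  have ex: "\<exists>a l. l \<ge> 1 \<and> (\<sigma>^^a) y = (\<sigma>^^(a+l)) y"
  proof (cases "i < j")
    case True then show ?thesis using ij by (intro exI[of _ i] exI[of _ "j-i"]) auto
  next
    case False then show ?thesis using ij by (intro exI[of _ j] exI[of _ "i-j"]) auto
  qed
  define k where "k = (LEAST a. \<exists>l. l \<ge> 1 \<and> (\<sigma>^^a) y = (\<sigma>^^(a+l)) y)"
  have "\<exists>l. l \<ge> 1 \<and> (\<sigma>^^k) y = (\<sigma>^^(k+l)) y"
    unfolding k_def using ex by (rule LeastI_ex)
  define l where "l = (LEAST l. l \<ge> 1 \<and> (\<sigma>^^k) y = (\<sigma>^^(k+l)) y)"
  have hk: "l \<ge> 1 \<and> (\<sigma>^^k) y = (\<sigma>^^(k+l)) y"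
    unfolding l_def by (rule LeastI_ex) fact
  have hkeq: "(\<sigma>^^k) y = (\<sigma>^^(k+l)) y" using hk by blast
  have kmin: "k \<le> a" if "l' \<ge> 1" "(\<sigma>^^a) y = (\<sigma>^^(a+l')) y" for a l'
    unfolding k_def using that by (intro Least_le) blast
  have lmin: "l \<le> l'" if "l' \<ge> 1" "(\<sigma>^^k) y = (\<sigma>^^(k+l')) y" for l'
    unfolding l_def using that by (intro Least_le) blast
  have Qkl: "Q (k, l)"
    unfolding Q_def
  proof (simp only: prod.case, intro conjI allI impI)
    show "l \<ge> 1" using hk by simp
    fix k' l' :: nat assume l1: "l' \<ge> 1"
    show "(\<sigma>^^k') y = (\<sigma>^^(k'+l')) y \<longleftrightarrow> k \<le> k' \<and> l dvd l'"
    proof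
      assume H: "k \<le> k' \<and> l dvd l'"
      then obtain q where "l' = q*l" by (metis dvd_def mult.commute)
      then show "(\<sigma>^^k') y = (\<sigma>^^(k'+l')) y"
        using orb_perq[OF hkeq, where b=k' and q=q] H by simp
    next
      assume eq: "(\<sigma>^^k') y = (\<sigma>^^(k'+l')) y"
      have kk: "k \<le> k'" using kmin[OF l1 eq] .
      define r where "r = l' mod l"
      define q where "q = l' div l"
      have "k'+l' = (k'+r) + q*l" unfolding r_def q_def using mod_div_mult_eq[of l' l] by linarith
      then have "(\<sigma>^^(k'+l')) y = (\<sigma>^^((k'+r) + q*l)) y" by (simp only:)
      also have "\<dots> = (\<sigma>^^(k'+r)) y"
        using orb_perq[OF hkeq, where b="k'+r" and q=q] kk by simp
      finally have e2: "(\<sigma>^^k') y = (\<sigma>^^(k'+r)) y" using eq by simp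
      define j where "j = k + k'*l - k'"
      have "k' \<le> k'*l" using hk by simp
      then have kl: "k' \<le> k + k'*l" by linarith
      have "(\<sigma>^^k) y = (\<sigma>^^(k + k'*l)) y"
        using orb_perq[OF hkeq, where b=k and q=k'] by simp
      also have "k + k'*l = k' + j" unfolding j_def using kl by simp
      also have "(\<sigma>^^(k'+j)) y = (\<sigma>^^(k'+r+j)) y" using orb_shift[OF e2] .
      also have "k'+r+j = (k+r) + k'*l" unfolding j_def using kl by simp
      also have "(\<sigma>^^((k+r) + k'*l)) y = (\<sigma>^^(k+r)) y"
        using orb_perq[OF hkeq, where b="k+r" and q=k'] by simp
      finally have e3: "(\<sigma>^^k) y = (\<sigma>^^(k+r)) y" .
      have "r < l" unfolding r_def using hk by simp
      then have "r = 0" using lmin[of r] e3 by (cases "r \<ge> 1") auto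
      then show "k \<le> k' \<and> l dvd l'" using kk unfolding r_def by auto
    qed
  qed
  have uniq: "p = (k, l)" if "Q p" for p
  proof -
    obtain k2 l2 where p: "p = (k2, l2)" by (cases p)
    have "Q (k2, l2)" using that p by simp
    then have q2: "l2 \<ge> 1" "\<forall>k' l'. l' \<ge> 1 \<longrightarrow> ((\<sigma> ^^ k') y = (\<sigma> ^^ (k' + l')) y \<longleftrightarrow> k2 \<le> k' \<and> l2 dvd l')"
      unfolding Q_def prod.case by blast+
    have q1: "l \<ge> 1" "\<forall>k' l'. l' \<ge> 1 \<longrightarrow> ((\<sigma> ^^ k') y = (\<sigma> ^^ (k' + l')) y \<longleftrightarrow> k \<le> k' \<and> l dvd l')"
      using Qkl unfolding Q_def prod.case by blast+
    have a: "(\<sigma> ^^ k2) y = (\<sigma> ^^ (k2 + l2)) y" using q2(2)[rule_format, of l2 k2] q2(1) by simp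
    have b: "(\<sigma> ^^ k) y = (\<sigma> ^^ (k + l)) y" using q1(2)[rule_format, of l k] q1(1) by simp
    have "k \<le> k2 \<and> l dvd l2" using q1(2)[rule_format, of l2 k2] a q2(1) by blast
    moreover have "k2 \<le> k \<and> l2 dvd l" using q2(2)[rule_format, of l k] b q1(1) by blast
    ultimately show ?thesis using p by (simp add: dvd_antisym)
  qed
  have "\<exists>!p. Q p" using Qkl uniq by (intro ex1I[of _ "(k,l)"])
  then have "Q (THE p. Q p)" by (rule theI')
  moreover have "tail_cycle \<sigma> y = (THE p. Q p)" unfolding tail_cycle_def Q_def by (rule refl)
  ultimately have QT: "Q (tail_cycle \<sigma> y)" by (simp only:)
  obtain a b where ab: "tail_cycle \<sigma> y = (a, b)" by (cases "tail_cycle \<sigma> y")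
  have "Q (a, b)" using QT ab by (simp only:)
  then have "b \<ge> 1 \<and> (\<forall>k' l'. l' \<ge> 1 \<longrightarrow> ((\<sigma> ^^ k') y = (\<sigma> ^^ (k' + l')) y \<longleftrightarrow> a \<le> k' \<and> b dvd l'))"
    unfolding Q_def prod.case .
  then show ?thesis unfolding ab fst_conv snd_conv .
qed

lemma Rep_zhat_of_int:
  assumes "0 < j" shows "Rep_zhat (zhat_of_int a) j = a mod int j"
proof -
  have "(\<lambda>n. if n = 0 then 0 else a mod int n) \<in> {x :: nat \<Rightarrow> int. x 0 = 0 \<and> (\<forall>n>0. 0 \<le> x n \<and> x n < int n) \<and>
   (\<forall>m n. 0 < m \<and> 0 < n \<and> n dvd m \<longrightarrow> x m mod int n = x n)}"
    by (auto simp: mod_mod_cancel)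
  then show ?thesis unfolding zhat_of_int_def using assms by (simp add: Abs_zhat_inverse)
qed

lemma Rep_zhat_bounds:
  assumes "0 < j" shows "0 \<le> Rep_zhat x j" "Rep_zhat x j < int j"
  using Rep_zhat[of x] assms by auto

theorem lemma3p6:
  fixes f :: "zhat \<Rightarrow> zhat" and P :: "nat \<Rightarrow> nat" and k m n :: nat
  assumes cont: "continuous_on UNIV f"
    and per: "period_map f P"
    and pos: "0 < k" "0 < m" "0 < n"
    and m1: "m = (P ^^ k) n" and m2: "m = (P ^^ (k + 1)) n"
  defines "K \<equiv> preperiod_length (reduction f m) {0..<int m}"
    and "L \<equiv> period_of (reduction f m) {0..<int m}"
  shows "\<forall>s t u v. 0 < u \<longrightarrow> 0 < v \<longrightarrow> zcong m s t \<longrightarrow> k + K \<le> u \<longrightarrow> k + K \<le> v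
           \<longrightarrow> u mod L = v mod L \<longrightarrow> zcong n ((f ^^ u) s) ((f ^^ v) t)"
proof -
  have Ppos: "\<And>j. j > 0 \<Longrightarrow> P j > 0" using per unfolding period_map_def by blast
  have fstep: "\<And>s t j. j > 0 \<Longrightarrow> zcong (P j) s t \<Longrightarrow> zcong j (f s) (f t)"
    using per unfolding period_map_def by blast
  have chain: "\<And>j x y. j > 0 \<Longrightarrow> zcong ((P^^i) j) x y \<Longrightarrow> zcong j ((f^^i) x) ((f^^i) y)" for i
  proof (induction i)
    case 0 then show ?case by simp
  next
    case (Suc i)
    have "zcong ((P^^i) (P j)) x y" using Suc.prems by (simp only: funpow_Suc_right comp_apply)
    then have "zcong (P j) ((f^^i) x) ((f^^i) y)" using Suc.IH Ppos Suc.prems(1) by blast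
    then show ?case using fstep Suc.prems(1) by simp
  qed
  have Pm: "P m = m" using m1 m2 by simp
  define g where "g = reduction f m"
  have redstep: "Rep_zhat (f x) m = g (Rep_zhat x m)" for x
  proof -
    have "Rep_zhat (zhat_of_int (Rep_zhat x m)) m = Rep_zhat x m"
      using Rep_zhat_of_int[OF pos(2)] Rep_zhat_bounds[OF pos(2), of x] by simp
    then have "zcong (P m) x (zhat_of_int (Rep_zhat x m))" unfolding zcong_def Pm by simp
    then have "zcong m (f x) (f (zhat_of_int (Rep_zhat x m)))" using fstep pos(2) by blast
    then show ?thesis unfolding zcong_def g_def reduction_def .
  qed
  have rediter: "Rep_zhat ((f^^j) x) m = (g^^j) (Rep_zhat x m)" for j x
    by (induction j) (simp_all add: redstep)
  have ginv: "\<forall>x\<in>{0..<int m}. g x \<in> {0..<int m}"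
    unfolding g_def reduction_def using Rep_zhat_bounds[OF pos(2)] by auto
  show ?thesis
  proof (intro allI impI)
  fix s t :: zhat and u v :: nat
  assume "0 < u" "0 < v" "zcong m s t" "k + K \<le> u" "k + K \<le> v" "u mod L = v mod L"
  note as = this
  show "zcong n ((f ^^ u) s) ((f ^^ v) t)"
  proof -
    define a where "a = Rep_zhat s m"
    have at: "a = Rep_zhat t m" using as(3) unfolding a_def zcong_def by simp
    have aF: "a \<in> {0..<int m}" unfolding a_def using Rep_zhat_bounds[OF pos(2)] by auto
    have finF: "finite {0..<int m}" by simp
    note spec = tail_cycle_spec[OF finF ginv aF]
    define ka where "ka = fst (tail_cycle g a)"
    define la where "la = snd (tail_cycle g a)"
    have kaK: "ka \<le> K" unfolding ka_def K_def preperiod_length_def g_def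
      using aF by (intro Max_ge) auto
    have laL: "la dvd L" unfolding la_def L_def period_of_def g_def
      using aF by (intro dvd_Lcm) auto
    have key: "(g^^u') a = (g^^v') a" if "ka \<le> u'" "u' \<le> v'" "la dvd (v' - u')" for u' v'
    proof (cases "u' = v'")
      case True then show ?thesis by simp
    next
      case False
      then have "v' - u' \<ge> 1" using that(2) by simp
      then have "(g^^u') a = (g^^(u' + (v'-u'))) a"
        using spec[THEN conjunct2, rule_format, where k'=u' and l'="v'-u'"] that unfolding ka_def la_def by simp
      then show ?thesis using that(2) by simp
    qed
    have "(g^^(u-k)) a = (g^^(v-k)) a"
    proof (cases "u \<le> v")
      case True
      have "L dvd (v - u)" using as(6) True mod_eq_dvd_iff_nat[of u v L] by simp
      moreover have "(v-k) - (u-k) = v - u" using as(4) by simp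
      ultimately have "la dvd ((v-k) - (u-k))" using laL dvd_trans by metis
      then show ?thesis using key[of "u-k" "v-k"] as(4) True kaK by simp
    next
      case False
      have "L dvd (u - v)" using as(6) False mod_eq_dvd_iff_nat[of v u L] by simp
      moreover have "(u-k) - (v-k) = u - v" using as(5) by simp
      ultimately have "la dvd ((u-k) - (v-k))" using laL dvd_trans by metis
      then show ?thesis using key[of "v-k" "u-k"] as(5) False kaK by simp
    qed
    then have "zcong m ((f^^(u-k)) s) ((f^^(v-k)) t)"
      unfolding zcong_def rediter a_def[symmetric] at[symmetric] .
    then have "zcong n ((f^^k) ((f^^(u-k)) s)) ((f^^k) ((f^^(v-k)) t))"
      using chain pos(3) m1 by blast
    moreover have "u = k + (u-k)" "v = k + (v-k)" using as(4,5) by auto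
    ultimately show ?thesis by (metis funpow_add comp_apply)
  qed
  qed
qed

end
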